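(* Let $E,F$ be effect algebras and let $[E,F]$ denote the set of all generalized effect algebra homomorphisms $E\to F$ (maps $f$ with $f(0)=0$ such that $a\perp b$ implies $f(a)\perp f(b)$ and $f(a\oplus b)=f(a)\oplus f(b)$). For $f,g\in[E,F]$: (i) if $f(a)\perp g(a)$ for all $a\in E$, then the pointwise orthosum $f\oplus g\colon a\mapsto f(a)\oplus g(a)$ belongs to $[E,F]$; (ii) if $f\leq g$ pointwise, then the pointwise difference $g\ominus f\colon a\mapsto g(a)\ominus f(a)$ belongs to $[E,F]$. Consequently, $[E,F]$ with the pointwise partial operation $\oplus$ and the zero map as $0$ is a generalized effect algebra whose algebraic ordering ($f\le g$ iff $g=f\oplus k$ for some $k\in[E,F]$) coincides with the pointwise ordering.
   Context: An effect algebra is a partial algebra $(E;\oplus,',0,1)$ with $\oplus$ commutative and associative (as Kleene identities), $a\oplus b=1$ iff $b=a'$, and $a\oplus 1$ defined iff $a=0$. Write $a\perp b$ if $a\oplus b$ is defined; $a\le b$ iff $a\oplus c=b$ for some $c$; $b\ominus a$ denotes the unique such $c$ (cancellation holds). A generalized effect algebra is a partial commutative monoid $(E;\oplus,0)$ satisfying cancellation ($a\oplus b=a\oplus c\Rightarrow b=c$) and positivity ($a\oplus b=0\Rightarrow a=0$). *)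

theory Defs
  imports Main
begin

text \<open>Partial binary operations are modelled as option-valued functions:
  op a b = None means a and b are not orthogonal; op a b = Some c means a oplus b = c.\<close>

definition ortho :: "('a \<Rightarrow> 'a \<Rightarrow> 'a option) \<Rightarrow> 'a \<Rightarrow> 'a \<Rightarrow> bool" where
  "ortho op a b \<longleftrightarrow> op a b \<noteq> None"

definition effect_algebra ::
  "('a \<Rightarrow> 'a \<Rightarrow> 'a option) \<Rightarrow> ('a \<Rightarrow> 'a) \<Rightarrow> 'a \<Rightarrow> 'a \<Rightarrow> bool" where
  "effect_algebra op cmp z u \<longleftrightarrow>
     (\<forall>a b. op a b = op b a) \<and>
     (\<forall>a b c. Option.bind (op a b) (\<lambda>x. op x c) = Option.bind (op b c) (\<lambda>y. op a y)) \<and>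
     (\<forall>a b. op a b = Some u \<longleftrightarrow> b = cmp a) \<and>
     (\<forall>a. op a u \<noteq> None \<longleftrightarrow> a = z)"

definition pa_le :: "('a \<Rightarrow> 'a \<Rightarrow> 'a option) \<Rightarrow> 'a \<Rightarrow> 'a \<Rightarrow> bool" where
  "pa_le op a b \<longleftrightarrow> (\<exists>c. op a c = Some b)"

definition pa_minus :: "('a \<Rightarrow> 'a \<Rightarrow> 'a option) \<Rightarrow> 'a \<Rightarrow> 'a \<Rightarrow> 'a" where
  "pa_minus op b a = (THE c. op a c = Some b)"

definition gen_effect_algebra ::
  "'c set \<Rightarrow> ('c \<Rightarrow> 'c \<Rightarrow> 'c option) \<Rightarrow> 'c \<Rightarrow> bool" where
  "gen_effect_algebra S op z \<longleftrightarrow>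
     z \<in> S \<and>
     (\<forall>a\<in>S. \<forall>b\<in>S. \<forall>c. op a b = Some c \<longrightarrow> c \<in> S) \<and>
     (\<forall>a\<in>S. \<forall>b\<in>S. op a b = op b a) \<and>
     (\<forall>a\<in>S. \<forall>b\<in>S. \<forall>c\<in>S.
        Option.bind (op a b) (\<lambda>x. op x c) = Option.bind (op b c) (\<lambda>y. op a y)) \<and>
     (\<forall>a\<in>S. op z a = Some a) \<and>
     (\<forall>a\<in>S. \<forall>b\<in>S. \<forall>c\<in>S. op a b \<noteq> None \<and> op a b = op a c \<longrightarrow> b = c) \<and>
     (\<forall>a\<in>S. \<forall>b\<in>S. op a b = Some z \<longrightarrow> a = z)"

definition gea_hom ::
  "('a \<Rightarrow> 'a \<Rightarrow> 'a option) \<Rightarrow> 'a \<Rightarrow> ('b \<Rightarrow> 'b \<Rightarrow> 'b option) \<Rightarrow> 'b \<Rightarrow> ('a \<Rightarrow> 'b) \<Rightarrow> bool" where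
  "gea_hom opE zE opF zF f \<longleftrightarrow>
     f zE = zF \<and> (\<forall>a b c. opE a b = Some c \<longrightarrow> opF (f a) (f b) = Some (f c))"

definition homs ::
  "('a \<Rightarrow> 'a \<Rightarrow> 'a option) \<Rightarrow> 'a \<Rightarrow> ('b \<Rightarrow> 'b \<Rightarrow> 'b option) \<Rightarrow> 'b \<Rightarrow> ('a \<Rightarrow> 'b) set" where
  "homs opE zE opF zF = {f. gea_hom opE zE opF zF f}"

definition fun_sum :: "('b \<Rightarrow> 'b \<Rightarrow> 'b option) \<Rightarrow> ('a \<Rightarrow> 'b) \<Rightarrow> ('a \<Rightarrow> 'b) \<Rightarrow> ('a \<Rightarrow> 'b) option" where
  "fun_sum opF f g =
     (if \<forall>a. opF (f a) (g a) \<noteq> None then Some (\<lambda>a. the (opF (f a) (g a))) else None)"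

end

theory Submission imports Defs begin

lemma ea_comm: "effect_algebra op cmp z u \<Longrightarrow> op a b = op b a"
  unfolding effect_algebra_def by blast

lemma ea_assoc1:
  assumes E: "effect_algebra op cmp z u" and "op a b = Some x" "op x c = Some y"
  shows "\<exists>w. op b c = Some w \<and> op a w = Some y"
proof -
  have "Option.bind (op a b) (\<lambda>x. op x c) = Option.bind (op b c) (\<lambda>y. op a y)"
    using E unfolding effect_algebra_def by blast
  with assms(2,3) show ?thesis by (cases "op b c") auto
qed

lemma ea_assoc2:
  assumes E: "effect_algebra op cmp z u" and "op b c = Some w" "op a w = Some y"
  shows "\<exists>x. op a b = Some x \<and> op x c = Some y"
proof -
  have "Option.bind (op a b) (\<lambda>x. op x c) = Option.bind (op b c) (\<lambda>y. op a y)"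
    using E unfolding effect_algebra_def by blast
  with assms(2,3) show ?thesis by (cases "op a b") auto
qed

lemma ea_cmp: "effect_algebra op cmp z u \<Longrightarrow> op a b = Some u \<longleftrightarrow> b = cmp a"
  unfolding effect_algebra_def by blast

lemma ea_u: "effect_algebra op cmp z u \<Longrightarrow> op a u \<noteq> None \<longleftrightarrow> a = z"
  unfolding effect_algebra_def by blast

lemma ea_cmpcmp: assumes E: "effect_algebra op cmp z u" shows "cmp (cmp a) = a"
proof -
  have "op a (cmp a) = Some u" using ea_cmp[OF E] by blast
  hence "op (cmp a) a = Some u" using ea_comm[OF E] by metis
  thus ?thesis using ea_cmp[OF E] by metis
qed

lemma ea_uz: assumes E: "effect_algebra op cmp z u" shows "op u z = Some u"
proof -
  have 1: "op u (cmp u) = Some u" using ea_cmp[OF E] by blast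
  hence "op (cmp u) u \<noteq> None" using ea_comm[OF E, of "cmp u" u] by simp
  hence "cmp u = z" using ea_u[OF E] by blast
  with 1 show ?thesis by simp
qed

lemma ea_zero: assumes E: "effect_algebra op cmp z u" shows "op a z = Some a"
proof -
  have "op (cmp a) (cmp (cmp a)) = Some u" using ea_cmp[OF E] by blast
  then obtain w where w: "op (cmp (cmp a)) z = Some w" "op (cmp a) w = Some u"
    using ea_assoc1[OF E _ ea_uz[OF E]] by blast
  hence "w = cmp (cmp a)" using ea_cmp[OF E] by blast
  with w show ?thesis using ea_cmpcmp[OF E] by simp
qed

lemma ea_zero_left: assumes E: "effect_algebra op cmp z u" shows "op z a = Some a"
  using ea_zero[OF E] ea_comm[OF E] by metis

lemma ea_cancel:
  assumes E: "effect_algebra op cmp z u" and b: "op a b = Some x" and c: "op a c = Some x"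
  shows "b = c"
proof -
  have xx: "op x (cmp x) = Some u" using ea_cmp[OF E] by blast
  obtain w where w: "op b (cmp x) = Some w" "op a w = Some u" using ea_assoc1[OF E b xx] by blast
  obtain w' where w': "op c (cmp x) = Some w'" "op a w' = Some u" using ea_assoc1[OF E c xx] by blast
  have ww: "w = cmp a" "w' = cmp a" using w w' ea_cmp[OF E] by blast+
  have aa: "op (cmp a) a = Some u" using ea_cmp[OF E] ea_comm[OF E] by metis
  obtain v where v: "op (cmp x) a = Some v" "op b v = Some u" using ea_assoc1[OF E _ aa] w ww by blast
  obtain v' where v': "op (cmp x) a = Some v'" "op c v' = Some u" using ea_assoc1[OF E _ aa] w' ww by blast
  have "v = v'" using v v' by simp
  thus ?thesis using v v' ea_cmp[OF E] ea_cmpcmp[OF E] ea_comm[OF E] by metis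
qed

lemma ea_pos:
  assumes E: "effect_algebra op cmp z u" and ab: "op a b = Some z" shows "a = z"
proof -
  have zu: "op z u = Some u" using ea_zero_left[OF E] .
  obtain w where "op b u = Some w" "op a w = Some u" using ea_assoc1[OF E ab zu] by blast
  hence "b = z" using ea_u[OF E] by blast
  thus ?thesis using ab ea_zero[OF E] by simp
qed

lemma ea_minus:
  assumes E: "effect_algebra op cmp z u" and "op a c = Some b" shows "pa_minus op b a = c"
  unfolding pa_minus_def using assms ea_cancel[OF E] by blast

lemma ea_swap:
  assumes E: "effect_algebra op cmp z u" and ab: "op a b = Some x" and cd: "op c d = Some y"
    and xy: "op x y = Some s"
  shows "\<exists>p q. op a c = Some p \<and> op b d = Some q \<and> op p q = Some s"
proof -
  obtain w where w: "op b y = Some w" "op a w = Some s" using ea_assoc1[OF E ab xy] by blast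
  obtain t where t: "op b c = Some t" "op t d = Some w" using ea_assoc2[OF E cd w(1)] by blast
  have t': "op c b = Some t" using t ea_comm[OF E] by metis
  obtain q where q: "op b d = Some q" "op c q = Some w" using ea_assoc1[OF E t' t(2)] by blast
  obtain p where p: "op a c = Some p" "op p q = Some s" using ea_assoc2[OF E q(2) w(2)] by blast
  show ?thesis using p q by blast
qed

lemma hom_sum:
  assumes F: "effect_algebra opF cF zF uF"
    and f: "gea_hom opE zE opF zF f" and g: "gea_hom opE zE opF zF g"
    and o: "\<forall>a. ortho opF (f a) (g a)"
  shows "gea_hom opE zE opF zF (\<lambda>a. the (opF (f a) (g a)))"
proof -
  have h: "opF (f a) (g a) = Some (the (opF (f a) (g a)))" for a
    using o unfolding ortho_def by auto
  have z: "f zE = zF" "g zE = zF" using f g unfolding gea_hom_def by auto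
  show ?thesis unfolding gea_hom_def
  proof (intro conjI allI impI)
    show "the (opF (f zE) (g zE)) = zF" using z ea_zero[OF F] by simp
  next
    fix a b c assume abc: "opE a b = Some c"
    have 1: "opF (f a) (f b) = Some (f c)" "opF (g a) (g b) = Some (g c)"
      using f g abc unfolding gea_hom_def by auto
    obtain p q where "opF (f a) (g a) = Some p" "opF (f b) (g b) = Some q" "opF p q = Some (the (opF (f c) (g c)))"
      using ea_swap[OF F 1(1) 1(2) h[of c]] by blast
    thus "opF (the (opF (f a) (g a))) (the (opF (f b) (g b))) = Some (the (opF (f c) (g c)))" by simp
  qed
qed

lemma hom_minus:
  assumes F: "effect_algebra opF cF zF uF"
    and f: "gea_hom opE zE opF zF f" and g: "gea_hom opE zE opF zF g"
    and le: "\<forall>a. pa_le opF (f a) (g a)"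
  shows "gea_hom opE zE opF zF (\<lambda>a. pa_minus opF (g a) (f a))"
proof -
  define h where "h = (\<lambda>a. pa_minus opF (g a) (f a))"
  have h: "opF (f a) (h a) = Some (g a)" for a
  proof -
    obtain k where "opF (f a) k = Some (g a)" using le unfolding pa_le_def by blast
    thus ?thesis unfolding h_def using ea_minus[OF F] by metis
  qed
  have z: "f zE = zF" "g zE = zF" using f g unfolding gea_hom_def by auto
  have "gea_hom opE zE opF zF h" unfolding gea_hom_def
  proof (intro conjI allI impI)
    have "opF zF (h zE) = Some zF" using h[of zE] z by simp
    thus "h zE = zF" using ea_zero_left[OF F] by (metis option.inject)
  next
    fix a b c assume abc: "opE a b = Some c"
    have 1: "opF (f a) (f b) = Some (f c)" "opF (g a) (g b) = Some (g c)"
      using f g abc unfolding gea_hom_def by auto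
    obtain p q where pq: "opF (f a) (f b) = Some p" "opF (h a) (h b) = Some q" "opF p q = Some (g c)"
      using ea_swap[OF F h[of a] h[of b] 1(2)] by blast
    have "q = h c" using ea_cancel[OF F pq(3)] h[of c] pq(1) 1(1) by simp
    thus "opF (h a) (h b) = Some (h c)" using pq by simp
  qed
  thus ?thesis unfolding h_def .
qed

lemma fun_sum_Some: "fun_sum opF f g = Some h \<longleftrightarrow> (\<forall>a. opF (f a) (g a) = Some (h a))"
  unfolding fun_sum_def by (auto simp: fun_eq_iff) (metis option.sel, metis option.distinct(1))

lemma fun_sum_None: "fun_sum opF f g = None \<longleftrightarrow> (\<exists>a. opF (f a) (g a) = None)"
  unfolding fun_sum_def by auto

theorem lemma3p1:
  fixes opE :: "'a \<Rightarrow> 'a \<Rightarrow> 'a option" and cE :: "'a \<Rightarrow> 'a" and zE uE :: 'a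
    and opF :: "'b \<Rightarrow> 'b \<Rightarrow> 'b option" and cF :: "'b \<Rightarrow> 'b" and zF uF :: 'b
  assumes E: "effect_algebra opE cE zE uE"
    and F: "effect_algebra opF cF zF uF"
  shows "(\<forall>f\<in>homs opE zE opF zF. \<forall>g\<in>homs opE zE opF zF.
            (\<forall>a. ortho opF (f a) (g a)) \<longrightarrow>
            (\<lambda>a. the (opF (f a) (g a))) \<in> homs opE zE opF zF)
       \<and> (\<forall>f\<in>homs opE zE opF zF. \<forall>g\<in>homs opE zE opF zF.
            (\<forall>a. pa_le opF (f a) (g a)) \<longrightarrow>
            (\<lambda>a. pa_minus opF (g a) (f a)) \<in> homs opE zE opF zF)
       \<and> gen_effect_algebra (homs opE zE opF zF) (fun_sum opF) (\<lambda>a. zF)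
       \<and> (\<forall>f\<in>homs opE zE opF zF. \<forall>g\<in>homs opE zE opF zF.
            (\<exists>k\<in>homs opE zE opF zF. fun_sum opF f k = Some g) \<longleftrightarrow> (\<forall>a. pa_le opF (f a) (g a)))"
proof -
  let ?H = "homs opE zE opF zF"
  have P1: "\<forall>f\<in>?H. \<forall>g\<in>?H. (\<forall>a. ortho opF (f a) (g a)) \<longrightarrow> (\<lambda>a. the (opF (f a) (g a))) \<in> ?H"
  proof (intro ballI impI)
    fix f g assume "f \<in> ?H" "g \<in> ?H" "\<forall>a. ortho opF (f a) (g a)"
    thus "(\<lambda>a. the (opF (f a) (g a))) \<in> ?H" unfolding homs_def mem_Collect_eq by (rule hom_sum[OF F])
  qed
  have P2: "\<forall>f\<in>?H. \<forall>g\<in>?H. (\<forall>a. pa_le opF (f a) (g a)) \<longrightarrow> (\<lambda>a. pa_minus opF (g a) (f a)) \<in> ?H"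
  proof (intro ballI impI)
    fix f g assume "f \<in> ?H" "g \<in> ?H" "\<forall>a. pa_le opF (f a) (g a)"
    thus "(\<lambda>a. pa_minus opF (g a) (f a)) \<in> ?H" unfolding homs_def mem_Collect_eq by (rule hom_minus[OF F])
  qed
  have P4: "\<forall>f\<in>?H. \<forall>g\<in>?H. (\<exists>k\<in>?H. fun_sum opF f k = Some g) \<longleftrightarrow> (\<forall>a. pa_le opF (f a) (g a))"
  proof (intro ballI iffI)
    fix f g assume "\<exists>k\<in>?H. fun_sum opF f k = Some g"
    then obtain k where "fun_sum opF f k = Some g" by blast
    thus "\<forall>a. pa_le opF (f a) (g a)" unfolding pa_le_def fun_sum_Some by blast
  next
    fix f g assume f: "f \<in> ?H" and g: "g \<in> ?H" and le: "\<forall>a. pa_le opF (f a) (g a)"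
    have "fun_sum opF f (\<lambda>a. pa_minus opF (g a) (f a)) = Some g"
      unfolding fun_sum_Some
    proof
      fix a
      obtain k where "opF (f a) k = Some (g a)" using le unfolding pa_le_def by blast
      thus "opF (f a) (pa_minus opF (g a) (f a)) = Some (g a)" using ea_minus[OF F] by metis
    qed
    moreover have "(\<lambda>a. pa_minus opF (g a) (f a)) \<in> ?H" using P2 f g le by simp
    ultimately show "\<exists>k\<in>?H. fun_sum opF f k = Some g" by blast
  qed
  have P3: "gen_effect_algebra ?H (fun_sum opF) (\<lambda>a. zF)"
    unfolding gen_effect_algebra_def
  proof (intro conjI ballI allI impI)
    show "(\<lambda>a. zF) \<in> ?H" unfolding homs_def gea_hom_def using ea_zero[OF F] by simp
  next
    fix a b c assume "a \<in> ?H" "b \<in> ?H" "fun_sum opF a b = Some c"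
    moreover have "c = (\<lambda>x. the (opF (a x) (b x)))" "\<forall>x. ortho opF (a x) (b x)"
      using calculation(3) unfolding fun_sum_Some ortho_def by auto
    ultimately show "c \<in> ?H" using P1 by blast
  next
    fix a b
    have "\<And>x. opF (a x) (b x) = opF (b x) (a x)" by (rule ea_comm[OF F])
    thus "fun_sum opF a b = fun_sum opF b a" unfolding fun_sum_def by simp
  next
    fix a b c :: "'a \<Rightarrow> 'b"
    show "Option.bind (fun_sum opF a b) (\<lambda>x. fun_sum opF x c) = Option.bind (fun_sum opF b c) (fun_sum opF a)"
    proof (cases "\<forall>x. opF (a x) (b x) \<noteq> None \<and> Option.bind (opF (a x) (b x)) (\<lambda>y. opF y (c x)) \<noteq> None")
      case True
      define s where "s = (\<lambda>x. the (Option.bind (opF (a x) (b x)) (\<lambda>y. opF y (c x))))"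
      have s: "\<forall>x. Option.bind (opF (a x) (b x)) (\<lambda>y. opF y (c x)) = Some (s x)"
        using True unfolding s_def by auto
      define ab where "ab = (\<lambda>x. the (opF (a x) (b x)))"
      have ab: "opF (a x) (b x) = Some (ab x)" for x using True unfolding ab_def by auto
      have abc: "opF (ab x) (c x) = Some (s x)" for x using s ab by (metis bind.simps(2))
      define bc where "bc = (\<lambda>x. the (opF (b x) (c x)))"
      have bc: "opF (b x) (c x) = Some (bc x)" "opF (a x) (bc x) = Some (s x)" for x
        using ea_assoc1[OF F ab abc] unfolding bc_def by (metis option.sel)+
      have "fun_sum opF a b = Some ab" "fun_sum opF ab c = Some s"
        "fun_sum opF b c = Some bc" "fun_sum opF a bc = Some s"
        unfolding fun_sum_Some using ab abc bc by auto
      thus ?thesis by simp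
    next
      case False
      have "Option.bind (fun_sum opF a b) (\<lambda>x. fun_sum opF x c) = None"
      proof (cases "fun_sum opF a b")
        case (Some ab)
        hence ab: "\<forall>x. opF (a x) (b x) = Some (ab x)" using fun_sum_Some by metis
        then obtain x where "opF (ab x) (c x) = None" using False by fastforce
        thus ?thesis using Some fun_sum_None by (metis bind.simps(2))
      qed simp
      moreover have "Option.bind (fun_sum opF b c) (fun_sum opF a) = None"
      proof (cases "fun_sum opF b c")
        case (Some bc)
        hence bc: "\<forall>x. opF (b x) (c x) = Some (bc x)" using fun_sum_Some by metis
        have "\<exists>x. opF (a x) (bc x) = None"
        proof (rule ccontr)
          assume "\<not> ?thesis"
          hence "\<forall>x. \<exists>s. opF (a x) (bc x) = Some s" by auto
          have "\<exists>ab s. opF (a x) (b x) = Some ab \<and> opF ab (c x) = Some s" for x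
          proof -
            obtain s where s: "opF (a x) (bc x) = Some s" using \<open>\<forall>x. \<exists>s. opF (a x) (bc x) = Some s\<close> by blast
            show ?thesis using ea_assoc2[OF F bc[rule_format] s] by blast
          qed
          moreover obtain x where "opF (a x) (b x) = None \<or> Option.bind (opF (a x) (b x)) (\<lambda>y. opF y (c x)) = None"
            using False by (auto | meson | metis)
          ultimately show False by (metis bind.simps(2) option.distinct(1))
        qed
        thus ?thesis using Some fun_sum_None by (metis bind.simps(2))
      qed simp
      ultimately show ?thesis by simp
    qed
  next
    fix a show "fun_sum opF (\<lambda>a. zF) a = Some a"
      unfolding fun_sum_Some using ea_zero_left[OF F] by blast
  next
    fix a b c assume "fun_sum opF a b \<noteq> None \<and> fun_sum opF a b = fun_sum opF a c"
    then obtain s where "fun_sum opF a b = Some s" "fun_sum opF a c = Some s" by (metis option.collapse)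
    thus "b = c" unfolding fun_sum_Some using ea_cancel[OF F] by blast
  next
    fix a b assume "fun_sum opF a b = Some (\<lambda>a. zF)"
    thus "a = (\<lambda>a. zF)" unfolding fun_sum_Some using ea_pos[OF F] by blast
  qed
  show ?thesis using P1 P2 P3 P4 by (intro conjI)
qed

end
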